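(* Let $R$ be a commutative ring. A map $p\colon E\to B$ of DG $R$-modules satisfies the enriched right lifting property against every map $S^{n-1}_R\to D^n_R$, $n\in\mathbb{Z}$, if and only if $p$ is a degreewise $R$-split epimorphism that is a chain homotopy equivalence.
   Context: DG $R$-modules are $\mathbb{Z}$-graded chain complexes of $R$-modules. $S^{n-1}_R$ is $R$ concentrated in degree $n-1$; $D^n_R$ is $R$ in degrees $n$ and $n-1$ with identity differential; $S^{n-1}_R\to D^n_R$ is the inclusion in degree $n-1$. For DG $R$-modules $M,N$, $\mathcal{M}_R(M,N)$ is the $R$-module of chain maps. For $i\colon W\to X$ and $p\colon E\to B$, $\underline{\mathrm{Sq}}(i,p)$ is the pullback of $R$-modules of $p_*\colon \mathcal{M}_R(W,E)\to \mathcal{M}_R(W,B)$ and $i^*\colon \mathcal{M}_R(X,B)\to\mathcal{M}_R(W,B)$. The map $p$ has the enriched right lifting property against $i$ if the induced map $\mathcal{M}_R(X,E)\to\underline{\mathrm{Sq}}(i,p)$ is a split epimorphism of $R$-modules. *)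

theory Defs
  imports Main "HOL.Modules" "HOL-Library.Function_Algebras" "HOL-Library.Product_Plus"
begin

text \<open>The components live inside an
ambient R-module 'm (scalar multiplication sc): the component in degree n is the
submodule carr M n, and the differential in degree n is diff M n : M_n \<rightarrow> M_(n-1).\<close>

type_synonym 'm dg = "(int \<Rightarrow> 'm set) \<times> (int \<Rightarrow> 'm \<Rightarrow> 'm)"

definition carr :: "'m dg \<Rightarrow> int \<Rightarrow> 'm set" where "carr M = fst M"
definition diff :: "'m dg \<Rightarrow> int \<Rightarrow> 'm \<Rightarrow> 'm" where "diff M = snd M"

definition lin_on :: "('r \<Rightarrow> 'a \<Rightarrow> 'a) \<Rightarrow> ('r \<Rightarrow> 'b \<Rightarrow> 'b) \<Rightarrow> 'a set \<Rightarrow> ('a::plus \<Rightarrow> 'b::plus) \<Rightarrow> bool"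
  where "lin_on sa sb S f \<longleftrightarrow>
    (\<forall>x\<in>S. \<forall>y\<in>S. f (x + y) = f x + f y) \<and> (\<forall>r. \<forall>x\<in>S. f (sa r x) = sb r (f x))"

definition dg_module :: "('r::comm_ring_1 \<Rightarrow> 'm::ab_group_add \<Rightarrow> 'm) \<Rightarrow> 'm dg \<Rightarrow> bool" where
  "dg_module sc M \<longleftrightarrow> module sc \<and>
     (\<forall>n. module.subspace sc (carr M n)) \<and>
     (\<forall>n. \<forall>x\<in>carr M n. diff M n x \<in> carr M (n - 1)) \<and>
     (\<forall>n. lin_on sc sc (carr M n) (diff M n)) \<and>
     (\<forall>n. \<forall>x\<in>carr M n. diff M (n - 1) (diff M n x) = 0)"

text \<open>Chain maps (degree 0, R-linear, commuting with differentials). They are taken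
extensional (zero outside the carriers) so that the chain maps form an R-module
under pointwise operations.\<close>
definition chain_map :: "('r::comm_ring_1 \<Rightarrow> 'a::ab_group_add \<Rightarrow> 'a) \<Rightarrow> 'a dg \<Rightarrow>
    ('r \<Rightarrow> 'b::ab_group_add \<Rightarrow> 'b) \<Rightarrow> 'b dg \<Rightarrow> (int \<Rightarrow> 'a \<Rightarrow> 'b) \<Rightarrow> bool" where
  "chain_map sa A sb B f \<longleftrightarrow>
     (\<forall>n. \<forall>x\<in>carr A n. f n x \<in> carr B n) \<and>
     (\<forall>n. lin_on sa sb (carr A n) (f n)) \<and>
     (\<forall>n. \<forall>x\<in>carr A n. f (n - 1) (diff A n x) = diff B n (f n x)) \<and>
     (\<forall>n x. x \<notin> carr A n \<longrightarrow> f n x = 0)"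

definition hom_dg where
  "hom_dg sa A sb B = {f. chain_map sa A sb B f}"

definition hscale :: "('r \<Rightarrow> 'b \<Rightarrow> 'b) \<Rightarrow> 'r \<Rightarrow> (int \<Rightarrow> 'a \<Rightarrow> 'b) \<Rightarrow> (int \<Rightarrow> 'a \<Rightarrow> 'b)" where
  "hscale sb r f = (\<lambda>n x. sb r (f n x))"

definition pscale :: "('r \<Rightarrow> 'b \<Rightarrow> 'b) \<Rightarrow> ('r \<Rightarrow> 'd \<Rightarrow> 'd) \<Rightarrow> 'r \<Rightarrow>
    (int \<Rightarrow> 'a \<Rightarrow> 'b) \<times> (int \<Rightarrow> 'c \<Rightarrow> 'd) \<Rightarrow> (int \<Rightarrow> 'a \<Rightarrow> 'b) \<times> (int \<Rightarrow> 'c \<Rightarrow> 'd)" where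
  "pscale sb sd r z = (hscale sb r (fst z), hscale sd r (snd z))"

text \<open>The pullback \<open>Sq(i,p)\<close> of \<open>p_*: \<M>(W,E) \<rightarrow> \<M>(W,B)\<close> and \<open>i^*: \<M>(X,B) \<rightarrow> \<M>(W,B)\<close>,
as the submodule of pairs of \<M>(W,E) \<times> \<M>(X,B) (operations componentwise).\<close>
definition sq_dg where
  "sq_dg sW W sX X i sE E sB B p =
     {(a, b). a \<in> hom_dg sW W sE E \<and> b \<in> hom_dg sX X sB B \<and>
              (\<lambda>n x. p n (a n x)) = (\<lambda>n x. b n (i n x))}"

definition sq_induced where
  "sq_induced i p f = ((\<lambda>n x. f n (i n x)), (\<lambda>n x. p n (f n x)))"

text \<open>Enriched right lifting property of p against i: the induced map is a split
epimorphism of R-modules, i.e. it has an R-linear section.\<close>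
definition enriched_rlp where
  "enriched_rlp sW W sX X i sE E sB B p \<longleftrightarrow>
     (\<exists>s. (\<forall>z\<in>sq_dg sW W sX X i sE E sB B p. s z \<in> hom_dg sX X sE E) \<and>
          lin_on (pscale sE sB) (hscale sE) (sq_dg sW W sX X i sE E sB B p) s \<and>
          (\<forall>z\<in>sq_dg sW W sX X i sE E sB B p. sq_induced i p (s z) = z))"

definition sphere_dg :: "int \<Rightarrow> 'r::comm_ring_1 dg" where
  "sphere_dg n = ((\<lambda>k. if k = n - 1 then UNIV else {0}), (\<lambda>k x. 0))"

definition disk_dg :: "int \<Rightarrow> 'r::comm_ring_1 dg" where
  "disk_dg n = ((\<lambda>k. if k = n \<or> k = n - 1 then UNIV else {0}), (\<lambda>k x. if k = n then x else 0))"

definition sphere_incl :: "int \<Rightarrow> int \<Rightarrow> 'r::comm_ring_1 \<Rightarrow> 'r" where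
  "sphere_incl n = (\<lambda>k x. if k = n - 1 then x else 0)"

definition degreewise_split_epi where
  "degreewise_split_epi sE E sB B p \<longleftrightarrow>
     (\<forall>n. \<exists>s. (\<forall>y\<in>carr B n. s y \<in> carr E n) \<and> lin_on sB sE (carr B n) s \<and>
              (\<forall>y\<in>carr B n. p n (s y) = y))"

definition chain_homotopic where
  "chain_homotopic sa A sb B f g \<longleftrightarrow>
     (\<exists>h. (\<forall>n. \<forall>x\<in>carr A n. h n x \<in> carr B (n + 1)) \<and>
          (\<forall>n. lin_on sa sb (carr A n) (h n)) \<and>
          (\<forall>n. \<forall>x\<in>carr A n. f n x - g n x = diff B (n + 1) (h n x) + h (n - 1) (diff A n x)))"

definition chain_htpy_equiv where
  "chain_htpy_equiv sa A sb B f \<longleftrightarrow>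
     (\<exists>g. chain_map sb B sa A g \<and>
          chain_homotopic sa A sa A (\<lambda>n x. g n (f n x)) (\<lambda>n x. x) \<and>
          chain_homotopic sb B sb B (\<lambda>n x. f n (g n x)) (\<lambda>n x. x))"

end

theory Submission
  imports Defs
begin


definition pairsc :: "('r \<Rightarrow> 'a \<Rightarrow> 'a) \<Rightarrow> ('r \<Rightarrow> 'b \<Rightarrow> 'b) \<Rightarrow> 'r \<Rightarrow> 'a \<times> 'b \<Rightarrow> 'a \<times> 'b"
  where "pairsc sa sb r z = (sa r (fst z), sb r (snd z))"

lemma lin_onI:
  "(\<And>x y. x\<in>S \<Longrightarrow> y\<in>S \<Longrightarrow> f (x+y) = f x + f y) \<Longrightarrow> (\<And>r x. x\<in>S \<Longrightarrow> f (sa r x) = sb r (f x))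
   \<Longrightarrow> lin_on sa sb S f"
  unfolding lin_on_def by blast

lemma lin_add: "lin_on sa sb S f \<Longrightarrow> x\<in>S \<Longrightarrow> y\<in>S \<Longrightarrow> f (x+y) = f x + f y"
  unfolding lin_on_def by blast

lemma lin_scale: "lin_on sa sb S f \<Longrightarrow> x\<in>S \<Longrightarrow> f (sa r x) = sb r (f x)"
  unfolding lin_on_def by blast

lemma lin_zero:
  fixes f :: "'a::ab_group_add \<Rightarrow> 'b::ab_group_add"
  shows "lin_on sa sb S f \<Longrightarrow> 0\<in>S \<Longrightarrow> f 0 = 0"
  using lin_add[of sa sb S f 0 0] by simp

lemma lin_diff:
  fixes f :: "'a::ab_group_add \<Rightarrow> 'b::ab_group_add"
  shows "lin_on sa sb S f \<Longrightarrow> x\<in>S \<Longrightarrow> y\<in>S \<Longrightarrow> x - y \<in> S \<Longrightarrow> f (x - y) = f x - f y"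
  using lin_add[of sa sb S f "x - y" y] by (simp add: algebra_simps)

lemma lin_uminus:
  fixes f :: "'a::ab_group_add \<Rightarrow> 'b::ab_group_add"
  shows "lin_on sa sb S f \<Longrightarrow> x\<in>S \<Longrightarrow> 0 \<in> S \<Longrightarrow> -x \<in> S \<Longrightarrow> f (- x) = - f x"
  using lin_diff[of sa sb S f 0 x] lin_zero[of sa sb S f] by simp

lemma lin_comp:
  "lin_on sa sb S f \<Longrightarrow> lin_on sb sc T g \<Longrightarrow> (\<And>x. x\<in>S \<Longrightarrow> f x \<in> T) \<Longrightarrow> lin_on sa sc S (\<lambda>x. g (f x))"
  unfolding lin_on_def by simp

lemma lin_plus:
  fixes f :: "'a::plus \<Rightarrow> 'b::ab_group_add"
  shows "module sb \<Longrightarrow> lin_on sa sb S f \<Longrightarrow> lin_on sa sb S g \<Longrightarrow> lin_on sa sb S (\<lambda>x. f x + g x)"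
  unfolding lin_on_def by (simp add: module.scale_right_distrib algebra_simps)

lemma lin_minus:
  fixes f :: "'a::plus \<Rightarrow> 'b::ab_group_add"
  shows "module sb \<Longrightarrow> lin_on sa sb S f \<Longrightarrow> lin_on sa sb S g \<Longrightarrow> lin_on sa sb S (\<lambda>x. f x - g x)"
  unfolding lin_on_def by (simp add: module.scale_right_diff_distrib algebra_simps)

lemma lin_id: "lin_on s s S (\<lambda>x. x)"
  unfolding lin_on_def by simp

lemma lin_0:
  fixes f :: "'a::plus \<Rightarrow> 'b::ab_group_add"
  shows "module sb \<Longrightarrow> lin_on sa sb S (\<lambda>x. 0::'b)"
  unfolding lin_on_def by (simp add: module.scale_zero_right)

lemma lin_mono: "lin_on sa sb S f \<Longrightarrow> T \<subseteq> S \<Longrightarrow> lin_on sa sb T f"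
  unfolding lin_on_def by blast

lemma lin_pair: "lin_on sa sb S f \<Longrightarrow> lin_on sa sc S g \<Longrightarrow> lin_on sa (pairsc sb sc) S (\<lambda>x. (f x, g x))"
  unfolding lin_on_def pairsc_def by simp

lemma lin_fst: "lin_on (pairsc sa sb) sa S fst"
  unfolding lin_on_def pairsc_def by simp

lemma lin_snd: "lin_on (pairsc sa sb) sb S snd"
  unfolding lin_on_def pairsc_def by simp

lemma lin_cong: "lin_on sa sb S f \<Longrightarrow> (\<And>x. x \<in> S \<Longrightarrow> f x = g x)
  \<Longrightarrow> (\<And>x y. x\<in>S \<Longrightarrow> y\<in>S \<Longrightarrow> x + y \<in> S) \<Longrightarrow> (\<And>r x. x\<in>S \<Longrightarrow> sa r x \<in> S) \<Longrightarrow> lin_on sa sb S g"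
  unfolding lin_on_def by simp



lemma carr_sphere[simp]: "carr (sphere_dg n) k = (if k = n - 1 then UNIV else {0})"
  and diff_sphere[simp]: "diff (sphere_dg n) k x = 0"
  and carr_disk[simp]: "carr (disk_dg n) k = (if k = n \<or> k = n - 1 then UNIV else {0})"
  and diff_disk[simp]: "diff (disk_dg n) k x = (if k = n then x else 0)"
  and incl_apply: "sphere_incl n k x = (if k = n - 1 then x else 0)"
  by (simp_all add: carr_def diff_def sphere_dg_def disk_dg_def sphere_incl_def)

definition dmap :: "('r::comm_ring_1 \<Rightarrow> 'm::ab_group_add \<Rightarrow> 'm) \<Rightarrow> 'm dg \<Rightarrow> int \<Rightarrow> 'm \<Rightarrow> int \<Rightarrow> 'r \<Rightarrow> 'm" where
  "dmap sM M n e = (\<lambda>k x. if k = n then sM x e else if k = n - 1 then sM x (diff M n e) else 0)"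

definition smap :: "('r::comm_ring_1 \<Rightarrow> 'm::ab_group_add \<Rightarrow> 'm) \<Rightarrow> int \<Rightarrow> 'm \<Rightarrow> int \<Rightarrow> 'r \<Rightarrow> 'm" where
  "smap sM n c = (\<lambda>k x. if k = n - 1 then sM x c else 0)"

lemma dgD:
  assumes "dg_module sM M"
  shows "module sM" "module.subspace sM (carr M n)" "x \<in> carr M n \<Longrightarrow> diff M n x \<in> carr M (n - 1)"
    "lin_on sM sM (carr M n) (diff M n)" "x\<in>carr M n \<Longrightarrow> diff M (n - 1) (diff M n x) = 0"
  using assms unfolding dg_module_def by auto

lemma dg0: "dg_module sM M \<Longrightarrow> 0 \<in> carr M n"
  using dgD module.subspace_0 by metis

lemma dgd0: "dg_module sM M \<Longrightarrow> diff M n 0 = 0"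
  using dgD(4) lin_zero dg0 by metis

lemma dgscale: "dg_module sM M \<Longrightarrow> x \<in> carr M n \<Longrightarrow> sM r x \<in> carr M n"
  using dgD module.subspace_scale by metis

lemma dgdscale: "dg_module sM M \<Longrightarrow> x \<in> carr M n \<Longrightarrow> diff M n (sM r x) = sM r (diff M n x)"
  using dgD(4) lin_scale by metis

lemma disk_map:
  assumes M: "dg_module sM M" and e: "e \<in> carr M n"
  shows "chain_map (*) (disk_dg n) sM M (dmap sM M n e)"
proof -
  have m: "module sM" using dgD[OF M] by simp
  have de: "diff M n e \<in> carr M (n - 1)" using dgD(3)[OF M e] .
  show ?thesis unfolding chain_map_def dmap_def
  proof (intro conjI allI ballI impI)
    fix k x show "(if k = n then sM x e else if k = n - 1 then sM x (diff M n e) else 0) \<in> carr M k"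
      using dgscale[OF M e] dgscale[OF M de] dg0[OF M] by auto
  next
    fix k show "lin_on (*) sM (carr (disk_dg n) k) (\<lambda>x. if k = n then sM x e else if k = n - 1 then sM x (diff M n e) else 0)"
      unfolding lin_on_def using m by (simp add: module.scale_left_distrib module.scale_scale module.scale_zero_right)
  next
    fix k and x :: 'a assume x: "x \<in> carr (disk_dg n) k"
    show "(if k - 1 = n then sM (diff (disk_dg n) k x) e else if k - 1 = n - 1 then sM (diff (disk_dg n) k x) (diff M n e) else 0) =
          diff M k (if k = n then sM x e else if k = n - 1 then sM x (diff M n e) else 0)"
      using x m dgdscale[OF M e] dgdscale[OF M de] dgD(5)[OF M e] dgd0[OF M]
      by (auto simp: module.scale_zero_left module.scale_zero_right)
  next
    fix k and x :: 'a assume "x \<notin> carr (disk_dg n) k"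
    thus "(if k = n then sM x e else if k = n - 1 then sM x (diff M n e) else 0) = 0"
      by (auto split: if_splits)
  qed
qed

lemma sphere_map:
  assumes M: "dg_module sM M" and c: "c \<in> carr M (n - 1)" and dc: "diff M (n - 1) c = 0"
  shows "chain_map (*) (sphere_dg n) sM M (smap sM n c)"
proof -
  have m: "module sM" using dgD[OF M] by simp
  show ?thesis unfolding chain_map_def smap_def
  proof (intro conjI allI ballI impI)
    fix k x show "(if k = n - 1 then sM x c else 0) \<in> carr M k"
      using dgscale[OF M c] dg0[OF M] by auto
  next
    fix k show "lin_on (*) sM (carr (sphere_dg n) k) (\<lambda>x. if k = n - 1 then sM x c else 0)"
      unfolding lin_on_def using m by (simp add: module.scale_left_distrib module.scale_scale module.scale_zero_right)
  next
    fix k and x :: 'a assume x: "x \<in> carr (sphere_dg n) k"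
    show "(if k - 1 = n - 1 then sM (diff (sphere_dg n) k x) c else 0) =
          diff M k (if k = n - 1 then sM x c else 0)"
      using x m dgdscale[OF M c] dc dgd0[OF M]
      by (auto simp: module.scale_zero_left module.scale_zero_right)
  next
    fix k and x :: 'a assume "x \<notin> carr (sphere_dg n) k"
    thus "(if k = n - 1 then sM x c else 0) = 0"
      by (auto split: if_splits)
  qed
qed

lemma disk_map_eq:
  assumes M: "dg_module sM M" and f: "chain_map (*) (disk_dg n) sM M f"
  shows "f = dmap sM M n (f n 1)" "f n 1 \<in> carr M n"
proof -
  have fl: "\<And>k. lin_on (*) sM (carr (disk_dg n) k) (f k)"
    and fe: "\<And>k x. x \<notin> carr (disk_dg n) k \<Longrightarrow> f k x = 0"
    and fc: "\<And>k x. x \<in> carr (disk_dg n) k \<Longrightarrow> f (k - 1) (diff (disk_dg n) k x) = diff M k (f k x)"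
    and fm: "\<And>k x. x \<in> carr (disk_dg n) k \<Longrightarrow> f k x \<in> carr M k"
    using f unfolding chain_map_def by auto
  show "f n 1 \<in> carr M n" using fm by simp
  have f1: "f (n - 1) 1 = diff M n (f n 1)" using fc[of 1 n] by simp
  show "f = dmap sM M n (f n 1)"
  proof (intro ext)
    fix k x
    show "f k x = dmap sM M n (f n 1) k x"
    proof (cases "k = n \<or> k = n - 1")
      case True
      have "f k (x * 1) = sM x (f k 1)" using lin_scale[OF fl, of 1 k x] True by simp
      thus ?thesis using True f1 unfolding dmap_def by auto
    next
      case False
      have "f k 0 = 0" using lin_zero[OF fl[of k]] by simp
      thus ?thesis using False fe[of x k] unfolding dmap_def by (cases "x = 0") auto
    qed
  qed
qed

lemma sphere_map_eq:
  assumes M: "dg_module sM M" and f: "chain_map (*) (sphere_dg n) sM M f"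
  shows "f = smap sM n (f (n - 1) 1)" "f (n - 1) 1 \<in> carr M (n - 1)" "diff M (n - 1) (f (n - 1) 1) = 0"
proof -
  have fl: "\<And>k. lin_on (*) sM (carr (sphere_dg n) k) (f k)"
    and fe: "\<And>k x. x \<notin> carr (sphere_dg n) k \<Longrightarrow> f k x = 0"
    and fc: "\<And>k x. x \<in> carr (sphere_dg n) k \<Longrightarrow> f (k - 1) (diff (sphere_dg n) k x) = diff M k (f k x)"
    and fm: "\<And>k x. x \<in> carr (sphere_dg n) k \<Longrightarrow> f k x \<in> carr M k"
    using f unfolding chain_map_def by auto
  show "f (n - 1) 1 \<in> carr M (n - 1)" using fm by simp
  have z: "\<And>k. f k 0 = 0" using lin_zero[OF fl] by simp
  show "diff M (n - 1) (f (n - 1) 1) = 0" using fc[of 1 "n - 1"] z by simp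
  show "f = smap sM n (f (n - 1) 1)"
  proof (intro ext)
    fix k x
    show "f k x = smap sM n (f (n - 1) 1) k x"
    proof (cases "k = n - 1")
      case True
      have "f k (x * 1) = sM x (f k 1)" using lin_scale[OF fl, of 1 k x] True by simp
      thus ?thesis using True unfolding smap_def by auto
    next
      case False
      thus ?thesis using False fe[of x k] z[of k] unfolding smap_def by (cases "x = 0") auto
    qed
  qed
qed



locale setting =
  fixes sE :: "'r::comm_ring_1 \<Rightarrow> 'e::ab_group_add \<Rightarrow> 'e"
    and sB :: "'r \<Rightarrow> 'b::ab_group_add \<Rightarrow> 'b"
    and E :: "'e dg" and B :: "'b dg" and p :: "int \<Rightarrow> 'e \<Rightarrow> 'b"
  assumes dgE: "dg_module sE E" and dgB: "dg_module sB B" and cmp: "chain_map sE E sB B p"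
begin

lemma mE: "module sE" and mB: "module sB" using dgE dgB unfolding dg_module_def by auto

lemma subE: "module.subspace sE (carr E n)" and subB: "module.subspace sB (carr B n)"
  using dgE dgB unfolding dg_module_def by auto

lemma E0[simp]: "0 \<in> carr E n" using module.subspace_0[OF mE subE] .
lemma B0[simp]: "0 \<in> carr B n" using module.subspace_0[OF mB subB] .
lemma Eadd[simp]: "x \<in> carr E n \<Longrightarrow> y \<in> carr E n \<Longrightarrow> x + y \<in> carr E n"
  using module.subspace_add[OF mE subE] .
lemma Badd[simp]: "x \<in> carr B n \<Longrightarrow> y \<in> carr B n \<Longrightarrow> x + y \<in> carr B n"
  using module.subspace_add[OF mB subB] .
lemma Ediff[simp]: "x \<in> carr E n \<Longrightarrow> y \<in> carr E n \<Longrightarrow> x - y \<in> carr E n"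
  using module.subspace_diff[OF mE subE] .
lemma Bdiff[simp]: "x \<in> carr B n \<Longrightarrow> y \<in> carr B n \<Longrightarrow> x - y \<in> carr B n"
  using module.subspace_diff[OF mB subB] .
lemma Eneg[simp]: "x \<in> carr E n \<Longrightarrow> - x \<in> carr E n"
  using module.subspace_neg[OF mE subE] .
lemma Bneg[simp]: "x \<in> carr B n \<Longrightarrow> - x \<in> carr B n"
  using module.subspace_neg[OF mB subB] .
lemma Escale[simp]: "x \<in> carr E n \<Longrightarrow> sE r x \<in> carr E n"
  using module.subspace_scale[OF mE subE] .
lemma Bscale[simp]: "x \<in> carr B n \<Longrightarrow> sB r x \<in> carr B n"
  using module.subspace_scale[OF mB subB] .

lemma dE[simp]: "x \<in> carr E n \<Longrightarrow> diff E n x \<in> carr E (n - 1)"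
  and dB[simp]: "y \<in> carr B n \<Longrightarrow> diff B n y \<in> carr B (n - 1)"
  using dgE dgB unfolding dg_module_def by auto
lemma linE: "lin_on sE sE (carr E n) (diff E n)" and linB: "lin_on sB sB (carr B n) (diff B n)"
  using dgE dgB unfolding dg_module_def by auto
lemma ddE[simp]: "x \<in> carr E n \<Longrightarrow> diff E (n - 1) (diff E n x) = 0"
  and ddB[simp]: "y \<in> carr B n \<Longrightarrow> diff B (n - 1) (diff B n y) = 0"
  using dgE dgB unfolding dg_module_def by auto

lemma pE[simp]: "x \<in> carr E n \<Longrightarrow> p n x \<in> carr B n"
  and linp: "lin_on sE sB (carr E n) (p n)"
  and pd: "x \<in> carr E n \<Longrightarrow> p (n - 1) (diff E n x) = diff B n (p n x)"
  using cmp unfolding chain_map_def by auto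

lemma dE0[simp]: "diff E n 0 = 0" using lin_zero[OF linE] by simp
lemma dB0[simp]: "diff B n 0 = 0" using lin_zero[OF linB] by simp
lemma p0[simp]: "p n 0 = 0" using lin_zero[OF linp] by simp
lemma dEadd[simp]: "x \<in> carr E n \<Longrightarrow> y \<in> carr E n \<Longrightarrow> diff E n (x + y) = diff E n x + diff E n y"
  using lin_add[OF linE] .
lemma dBadd[simp]: "x \<in> carr B n \<Longrightarrow> y \<in> carr B n \<Longrightarrow> diff B n (x + y) = diff B n x + diff B n y"
  using lin_add[OF linB] .
lemma padd[simp]: "x \<in> carr E n \<Longrightarrow> y \<in> carr E n \<Longrightarrow> p n (x + y) = p n x + p n y"
  using lin_add[OF linp] .
lemma dEdiff[simp]: "x \<in> carr E n \<Longrightarrow> y \<in> carr E n \<Longrightarrow> diff E n (x - y) = diff E n x - diff E n y"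
  using lin_diff[OF linE] by simp
lemma dBdiff[simp]: "x \<in> carr B n \<Longrightarrow> y \<in> carr B n \<Longrightarrow> diff B n (x - y) = diff B n x - diff B n y"
  using lin_diff[OF linB] by simp
lemma pdiff[simp]: "x \<in> carr E n \<Longrightarrow> y \<in> carr E n \<Longrightarrow> p n (x - y) = p n x - p n y"
  using lin_diff[OF linp] by simp
lemma dEneg[simp]: "x \<in> carr E n \<Longrightarrow> diff E n (- x) = - diff E n x"
  using lin_uminus[OF linE] by simp
lemma pneg[simp]: "x \<in> carr E n \<Longrightarrow> p n (- x) = - p n x"
  using lin_uminus[OF linp] by simp
lemma dEscale[simp]: "x \<in> carr E n \<Longrightarrow> diff E n (sE r x) = sE r (diff E n x)"
  using lin_scale[OF linE] .
lemma dBscale[simp]: "x \<in> carr B n \<Longrightarrow> diff B n (sB r x) = sB r (diff B n x)"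
  using lin_scale[OF linB] .
lemma pscale'[simp]: "x \<in> carr E n \<Longrightarrow> p n (sE r x) = sB r (p n x)"
  using lin_scale[OF linp] .

definition Q where "Q n = {z. fst z \<in> carr E (n - 1) \<and> diff E (n - 1) (fst z) = 0 \<and>
   snd z \<in> carr B n \<and> p (n - 1) (fst z) = diff B n (snd z)}"

definition is_lift where "is_lift n l \<longleftrightarrow>
  (\<forall>z\<in>Q n. l z \<in> carr E n \<and> diff E n (l z) = fst z \<and> p n (l z) = snd z) \<and>
  lin_on (pairsc sE sB) sE (Q n) l"

end


context setting begin

lemma B1:
  assumes L: "\<And>n. is_lift n (L n)"
  shows "degreewise_split_epi sE E sB B p \<and> chain_htpy_equiv sE E sB B p"
proof -
  have LQ: "\<And>n z. z \<in> Q n \<Longrightarrow> L n z \<in> carr E n \<and> diff E n (L n z) = fst z \<and> p n (L n z) = snd z"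
    using L unfolding is_lift_def by blast
  have Llin: "\<And>n. lin_on (pairsc sE sB) sE (Q n) (L n)" using L unfolding is_lift_def by blast
  have Q00: "\<And>n. (0,0) \<in> Q n" unfolding Q_def by simp
  have L00[simp]: "\<And>n. L n (0,0) = 0" using lin_zero[OF Llin] Q00 by (simp add: zero_prod_def)
  define \<sigma> where "\<sigma> n b = L n (L (n-1) (0, diff B n b), b)" for n b
  have Q1: "\<And>n b. b \<in> carr B n \<Longrightarrow> (0, diff B n b) \<in> Q (n-1)" unfolding Q_def by simp
  have Q2: "\<And>n b. b \<in> carr B n \<Longrightarrow> (L (n-1) (0, diff B n b), b) \<in> Q n"
    using LQ[OF Q1] unfolding Q_def by simp
  have sig: "\<And>n b. b \<in> carr B n \<Longrightarrow> \<sigma> n b \<in> carr E n \<and> p n (\<sigma> n b) = b"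
    using LQ[OF Q2] unfolding \<sigma>_def by simp
  have sigd: "\<And>n b. b \<in> carr B n \<Longrightarrow> diff E n (\<sigma> n b) = \<sigma> (n-1) (diff B n b)"
    using LQ[OF Q2] unfolding \<sigma>_def by simp
  have siglin: "\<And>n. lin_on sB sE (carr B n) (\<sigma> n)"
  proof -
    fix n
    have l1: "lin_on sB (pairsc sE sB) (carr B n) (\<lambda>b. (0::'e, diff B n b))"
      by (rule lin_pair[OF lin_0[OF mE] linB])
    have l2: "lin_on sB sE (carr B n) (\<lambda>b. L (n-1) (0, diff B n b))"
      by (rule lin_comp[OF l1 Llin Q1])
    have l3: "lin_on sB (pairsc sE sB) (carr B n) (\<lambda>b. (L (n-1) (0, diff B n b), b))"
      by (rule lin_pair[OF l2 lin_id])
    show "?thesis n" unfolding \<sigma>_def[abs_def] by (rule lin_comp[OF l3 Llin Q2])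
  qed
  have split: "degreewise_split_epi sE E sB B p"
    unfolding degreewise_split_epi_def using sig siglin by blast
  define g where "g n b = (if b \<in> carr B n then \<sigma> n b else 0)" for n b
  have gcm: "chain_map sB B sE E g"
    unfolding chain_map_def
  proof (intro conjI allI ballI impI)
    fix n x assume "x \<in> carr B n" thus "g n x \<in> carr E n" using sig g_def by simp
  next
    fix n show "lin_on sB sE (carr B n) (g n)"
      by (rule lin_cong[OF siglin]) (auto simp: g_def)
  next
    fix n x assume "x \<in> carr B n" thus "g (n - 1) (diff B n x) = diff E n (g n x)"
      using sigd g_def by simp
  next
    fix n x assume "x \<notin> carr B n" thus "g n x = 0" by (simp add: g_def)
  qed
  have h1: "chain_homotopic sB B sB B (\<lambda>n x. p n (g n x)) (\<lambda>n x. x)"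
    unfolding chain_homotopic_def
    by (rule exI[of _ "\<lambda>n x. 0"]) (simp add: lin_0[OF mB] g_def sig)
  define kk where "kk n x = \<sigma> n (p n x) - x" for n x
  define K where "K n x = kk n x - L n (diff E n (kk n x), 0)" for n x
  define H where "H n x = L (n+1) (K n x, 0)" for n x
  have kk: "\<And>n x. x \<in> carr E n \<Longrightarrow> kk n x \<in> carr E n \<and> p n (kk n x) = 0"
    using sig unfolding kk_def by simp
  have Q3: "\<And>n x. x \<in> carr E n \<Longrightarrow> (diff E n (kk n x), 0) \<in> Q n"
    using kk unfolding Q_def by (simp add: pd)
  have Q3': "\<And>n k. k \<in> carr E n \<Longrightarrow> p n k = 0 \<Longrightarrow> (diff E n k, 0) \<in> Q n"
    unfolding Q_def by (simp add: pd)
  have Q4: "\<And>n x. x \<in> carr E n \<Longrightarrow> (K n x, 0) \<in> Q (n+1)"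
    using kk LQ[OF Q3] unfolding Q_def K_def by simp
  have Hmem: "\<And>n x. x \<in> carr E n \<Longrightarrow> H n x \<in> carr E (n+1) \<and> diff E (n+1) (H n x) = K n x"
    using LQ[OF Q4] unfolding H_def by simp
  have kkd: "\<And>n x. x \<in> carr E n \<Longrightarrow> kk (n-1) (diff E n x) = diff E n (kk n x)"
    using sig sigd unfolding kk_def by (simp add: pd)
  have Kd: "\<And>n x. x \<in> carr E n \<Longrightarrow> K (n-1) (diff E n x) = diff E n (kk n x)"
    using kk kkd unfolding K_def by simp
  have Hlin: "\<And>n. lin_on sE sE (carr E n) (H n)"
  proof -
    fix n
    let ?S = "{k. k \<in> carr E n \<and> p n k = 0}"
    have kklin: "lin_on sE sE (carr E n) (kk n)" unfolding kk_def[abs_def]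
      by (rule lin_minus[OF mE lin_comp[OF linp siglin] lin_id]) simp
    have a1: "lin_on sE (pairsc sE sB) ?S (\<lambda>k. (diff E n k, 0::'b))"
      by (rule lin_mono[OF lin_pair[OF linE lin_0[OF mB]]]) auto
    have a2: "lin_on sE sE ?S (\<lambda>k. L n (diff E n k, 0))"
      by (rule lin_comp[OF a1 Llin]) (simp add: Q3')
    have a3: "lin_on sE sE (carr E n) (K n)" unfolding K_def[abs_def]
      by (rule lin_minus[OF mE kklin lin_comp[OF kklin a2]]) (simp add: kk)
    have a4: "lin_on sE (pairsc sE sB) (carr E n) (\<lambda>x. (K n x, 0::'b))"
      by (rule lin_pair[OF a3 lin_0[OF mB]])
    show "?thesis n" unfolding H_def[abs_def] by (rule lin_comp[OF a4 Llin Q4])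
  qed
  have h2: "chain_homotopic sE E sE E (\<lambda>n x. g n (p n x)) (\<lambda>n x. x)"
    unfolding chain_homotopic_def
  proof (rule exI[of _ H], intro conjI allI ballI)
    fix n x assume x: "x \<in> carr E n"
    show "H n x \<in> carr E (n+1)" using Hmem x by simp
    have "H (n-1) (diff E n x) = L n (diff E n (kk n x), 0)"
      using Kd[OF x] unfolding H_def by simp
    thus "g n (p n x) - x = diff E (n + 1) (H n x) + H (n - 1) (diff E n x)"
      using Hmem[OF x] x unfolding K_def kk_def g_def by simp
  next
    fix n show "lin_on sE sE (carr E n) (H n)" by (rule Hlin)
  qed
  show ?thesis using split gcm h1 h2 unfolding chain_htpy_equiv_def by blast
qed

end


context setting begin


lemma B2:
  assumes split: "degreewise_split_epi sE E sB B p" and he: "chain_htpy_equiv sE E sB B p"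
  shows "\<exists>l. is_lift n l"
proof -
  obtain \<sigma> where sig: "\<And>n. (\<forall>y\<in>carr B n. \<sigma> n y \<in> carr E n) \<and> lin_on sB sE (carr B n) (\<sigma> n) \<and>
              (\<forall>y\<in>carr B n. p n (\<sigma> n y) = y)"
    using split unfolding degreewise_split_epi_def by metis
  have sigm[simp]: "\<And>n y. y \<in> carr B n \<Longrightarrow> \<sigma> n y \<in> carr E n" using sig by blast
  have sigp[simp]: "\<And>n y. y \<in> carr B n \<Longrightarrow> p n (\<sigma> n y) = y" using sig by blast
  have siglin: "\<And>n. lin_on sB sE (carr B n) (\<sigma> n)" using sig by blast
  have sig0[simp]: "\<And>n. \<sigma> n 0 = 0" using lin_zero[OF siglin] by simp
  obtain g where gcm: "chain_map sB B sE E g"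
    and hH: "chain_homotopic sE E sE E (\<lambda>n x. g n (p n x)) (\<lambda>n x. x)"
    and hL: "chain_homotopic sB B sB B (\<lambda>n x. p n (g n x)) (\<lambda>n x. x)"
    using he unfolding chain_htpy_equiv_def by blast
  obtain H where Hm[simp]: "\<And>n x. x\<in>carr E n \<Longrightarrow> H n x \<in> carr E (n + 1)"
    and Hlin: "\<And>n. lin_on sE sE (carr E n) (H n)"
    and Heq: "\<And>n x. x\<in>carr E n \<Longrightarrow> g n (p n x) - x = diff E (n + 1) (H n x) + H (n - 1) (diff E n x)"
    using hH unfolding chain_homotopic_def by blast
  obtain L where Lm[simp]: "\<And>n x. x\<in>carr B n \<Longrightarrow> L n x \<in> carr B (n + 1)"
    and Llin: "\<And>n. lin_on sB sB (carr B n) (L n)"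
    and Leq: "\<And>n x. x\<in>carr B n \<Longrightarrow> p n (g n x) - x = diff B (n + 1) (L n x) + L (n - 1) (diff B n x)"
    using hL unfolding chain_homotopic_def by blast
  have gm[simp]: "\<And>n x. x \<in> carr B n \<Longrightarrow> g n x \<in> carr E n"
    and glin: "\<And>n. lin_on sB sE (carr B n) (g n)"
    and gd: "\<And>n x. x \<in> carr B n \<Longrightarrow> g (n - 1) (diff B n x) = diff E n (g n x)"
    using gcm unfolding chain_map_def by auto
  have L0[simp]: "\<And>n. L n 0 = 0" using lin_zero[OF Llin] by simp
  have H0[simp]: "\<And>n. H n 0 = 0" using lin_zero[OF Hlin] by simp
  define s where "s n b = g n b - diff E (n+1) (\<sigma> (n+1) (L n b)) - \<sigma> n (L (n-1) (diff B n b))" for n b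
  have sm[simp]: "\<And>n b. b \<in> carr B n \<Longrightarrow> s n b \<in> carr E n"
  proof -
    fix n b assume b: "b \<in> carr B n"
    have "diff E (n+1) (\<sigma> (n+1) (L n b)) \<in> carr E n" using dE[of "\<sigma> (n+1) (L n b)" "n+1"] b by simp
    moreover have "\<sigma> n (L (n-1) (diff B n b)) \<in> carr E n" using b Lm[of "diff B n b" "n-1"] by simp
    ultimately show "s n b \<in> carr E n" using b unfolding s_def by simp
  qed
  have sp[simp]: "\<And>n b. b \<in> carr B n \<Longrightarrow> p n (s n b) = b"
  proof -
    fix n b assume b: "b \<in> carr B n"
    have m1: "\<sigma> (n+1) (L n b) \<in> carr E (n+1)" using b by simp
    have m2: "diff E (n+1) (\<sigma> (n+1) (L n b)) \<in> carr E n" using dE[OF m1] by simp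
    have m3: "L (n-1) (diff B n b) \<in> carr B n" using b Lm[of "diff B n b" "n-1"] by simp
    have "p n (diff E (n+1) (\<sigma> (n+1) (L n b))) = diff B (n+1) (L n b)"
      using pd[OF m1] b by simp
    thus "p n (s n b) = b" using m2 m3 b Leq[OF b] unfolding s_def by (simp add: algebra_simps)
  qed
  have sd: "\<And>n b. b \<in> carr B n \<Longrightarrow> diff E n (s n b) = s (n-1) (diff B n b)"
  proof -
    fix n b assume b: "b \<in> carr B n"
    have m1: "\<sigma> (n+1) (L n b) \<in> carr E (n+1)" using b by simp
    have m2: "diff E (n+1) (\<sigma> (n+1) (L n b)) \<in> carr E n" using dE[OF m1] by simp
    have m3: "L (n-1) (diff B n b) \<in> carr B n" using b Lm[of "diff B n b" "n-1"] by simp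
    have "diff E n (diff E (n+1) (\<sigma> (n+1) (L n b))) = 0" using ddE[OF m1] by simp
    thus "diff E n (s n b) = s (n-1) (diff B n b)"
      using m2 m3 b gd[OF b] unfolding s_def by simp
  qed
  have slin: "\<And>n. lin_on sB sE (carr B n) (s n)"
  proof -
    fix n
    have a1: "lin_on sB sE (carr B n) (\<lambda>b. diff E (n+1) (\<sigma> (n+1) (L n b)))"
      by (rule lin_comp[OF lin_comp[OF Llin siglin] linE]) simp_all
    have a2: "lin_on sB sE (carr B n) (\<lambda>b. \<sigma> n (L (n-1) (diff B n b)))"
      by (rule lin_comp[OF lin_comp[OF linB Llin] siglin]) (simp_all add: Lm[of _ "n-1", simplified])
    show "?thesis n" unfolding s_def[abs_def]
      by (rule lin_minus[OF mE lin_minus[OF mE glin a1] a2])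
  qed
  have s0[simp]: "\<And>n. s n 0 = 0" using lin_zero[OF slin] by simp
  define H' where "H' n x = H n x - \<sigma> (n+1) (L n (p n x))" for n x
  have H'm[simp]: "\<And>n x. x \<in> carr E n \<Longrightarrow> H' n x \<in> carr E (n+1)"
    unfolding H'_def by simp
  have H'lin: "\<And>n. lin_on sE sE (carr E n) (H' n)" unfolding H'_def[abs_def]
    by (rule lin_minus[OF mE Hlin lin_comp[OF lin_comp[OF linp Llin] siglin]]) simp_all
  have H'0[simp]: "\<And>n. H' n 0 = 0" using lin_zero[OF H'lin] by simp
  have H'eq: "\<And>n x. x \<in> carr E n \<Longrightarrow> s n (p n x) - x = diff E (n+1) (H' n x) + H' (n-1) (diff E n x)"
  proof -
    fix n x assume x: "x \<in> carr E n"
    have m1: "\<sigma> (n+1) (L n (p n x)) \<in> carr E (n+1)" using x by simp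
    have m3: "L (n-1) (diff B n (p n x)) \<in> carr B n" using x Lm[of "diff B n (p n x)" "n-1"] by simp
    show "?thesis n x" using Heq[OF x] x m1 m3 unfolding s_def H'_def by (simp add: pd)
  qed
  define k where "k z = diff E n (s n (snd z)) - fst z" for z
  define l where "l z = s n (snd z) + H' (n-1) (k z) - s n (p n (H' (n-1) (k z)))" for z
  have km: "\<And>z. z \<in> Q n \<Longrightarrow> k z \<in> carr E (n-1) \<and> p (n-1) (k z) = 0 \<and> diff E (n-1) (k z) = 0"
  proof -
    fix z assume z: "z \<in> Q n"
    have m: "s n (snd z) \<in> carr E n" using z unfolding Q_def by simp
    show "?thesis z" using z m pd[OF m] ddE[OF m] unfolding Q_def k_def by simp
  qed
  have H'km: "\<And>z. z \<in> Q n \<Longrightarrow> H' (n-1) (k z) \<in> carr E n" using km H'm[of _ "n-1"] by fastforce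
  have dH'k: "\<And>z. z \<in> Q n \<Longrightarrow> diff E n (H' (n-1) (k z)) = - k z"
  proof -
    fix z assume z: "z \<in> Q n"
    show "?thesis z" using H'eq[of "k z" "n-1"] km[OF z] by simp
  qed
  have isl: "is_lift n l" unfolding is_lift_def
  proof (intro conjI ballI)
    fix z assume z: "z \<in> Q n"
    have b: "snd z \<in> carr B n" using z unfolding Q_def by simp
    have h: "H' (n-1) (k z) \<in> carr E n" using H'km[OF z] .
    have ph: "p n (H' (n-1) (k z)) \<in> carr B n" using h by simp
    show "l z \<in> carr E n" unfolding l_def using b h ph by simp
    show "p n (l z) = snd z" unfolding l_def using b h ph by simp
    have "diff E n (s n (p n (H' (n-1) (k z)))) = 0"
    proof -
      have "diff B n (p n (H' (n-1) (k z))) = p (n-1) (- k z)"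
        using pd[OF h] dH'k[OF z] by simp
      also have "\<dots> = 0" using km[OF z] by simp
      finally show ?thesis using sd[OF ph] by simp
    qed
    thus "diff E n (l z) = fst z" unfolding l_def using b h ph dH'k[OF z] by (simp add: k_def)
  next
    have a1: "lin_on (pairsc sE sB) sE (Q n) (\<lambda>z. s n (snd z))"
      by (rule lin_comp[OF lin_snd slin]) (simp add: Q_def)
    have a2: "lin_on (pairsc sE sB) sE (Q n) k" unfolding k_def[abs_def]
      by (rule lin_minus[OF mE lin_comp[OF a1 linE] lin_fst]) (simp add: Q_def)
    have a3: "lin_on (pairsc sE sB) sE (Q n) (\<lambda>z. H' (n-1) (k z))"
      by (rule lin_comp[OF a2 H'lin]) (simp add: km)
    have a4: "lin_on (pairsc sE sB) sE (Q n) (\<lambda>z. s n (p n (H' (n-1) (k z))))"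
      by (rule lin_comp[OF lin_comp[OF a3 linp] slin]) (simp_all add: H'km)
    show "lin_on (pairsc sE sB) sE (Q n) l" unfolding l_def[abs_def]
      by (rule lin_minus[OF mE lin_plus[OF mE a1 a3] a4])
  qed
  thus ?thesis by blast
qed

end


context setting begin

abbreviation "sq n \<equiv> sq_dg (*) (sphere_dg n) (*) (disk_dg n) (sphere_incl n) sE E sB B p"

lemma scE_comm: "sE x (sE r c) = sE r (sE x c)" using module.scale_left_commute[OF mE] .
lemma scB_comm: "sB x (sB r c) = sB r (sB x c)" using module.scale_left_commute[OF mB] .
lemma scE0[simp]: "sE r 0 = 0" "sE 0 x = 0" using mE by (simp_all add: module.scale_zero_right module.scale_zero_left)
lemma scB0[simp]: "sB r 0 = 0" "sB 0 x = 0" using mB by (simp_all add: module.scale_zero_right module.scale_zero_left)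
lemma scE1[simp]: "sE 1 x = x" using mE by (simp add: module.scale_one)
lemma scB1[simp]: "sB 1 x = x" using mB by (simp add: module.scale_one)
lemma scEadd: "sE r (x + y) = sE r x + sE r y" using mE by (simp add: module.scale_right_distrib)
lemma scBadd: "sB r (x + y) = sB r x + sB r y" using mB by (simp add: module.scale_right_distrib)

lemma A1:
  assumes en: "enriched_rlp (*) (sphere_dg n) (*) (disk_dg n) (sphere_incl n) sE E sB B p"
  shows "\<exists>l. is_lift n l"
proof -
  obtain s where sH: "\<And>z. z \<in> sq n \<Longrightarrow> s z \<in> hom_dg (*) (disk_dg n) sE E"
    and slin: "lin_on (pscale sE sB) (hscale sE) (sq n) s"
    and sI: "\<And>z. z \<in> sq n \<Longrightarrow> sq_induced (sphere_incl n) p (s z) = z"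
    using en unfolding enriched_rlp_def by blast
  define w where "w z = (smap sE n (fst z), dmap sB B n (snd z))" for z
  have wsq: "\<And>z. z \<in> Q n \<Longrightarrow> w z \<in> sq n"
  proof -
    fix z assume z: "z \<in> Q n"
    have zz: "fst z \<in> carr E (n-1)" "diff E (n-1) (fst z) = 0" "snd z \<in> carr B n"
      "p (n-1) (fst z) = diff B n (snd z)" using z unfolding Q_def by auto
    have "(\<lambda>k x. p k (smap sE n (fst z) k x)) = (\<lambda>k x. dmap sB B n (snd z) k (sphere_incl n k x))"
      using zz by (intro ext) (auto simp: smap_def dmap_def incl_apply)
    thus "w z \<in> sq n" unfolding w_def sq_dg_def hom_dg_def
      using sphere_map[OF dgE zz(1,2)] disk_map[OF dgB zz(3)] by simp
  qed
  define l where "l z = s (w z) n 1" for z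
  have props: "\<And>z. z \<in> Q n \<Longrightarrow> l z \<in> carr E n \<and> diff E n (l z) = fst z \<and> p n (l z) = snd z"
  proof -
    fix z assume z: "z \<in> Q n"
    have f: "chain_map (*) (disk_dg n) sE E (s (w z))" using sH[OF wsq[OF z]] unfolding hom_dg_def by simp
    have I: "(\<lambda>k x. s (w z) k (sphere_incl n k x)) = smap sE n (fst z)"
      "(\<lambda>k x. p k (s (w z) k x)) = dmap sB B n (snd z)"
      using sI[OF wsq[OF z]] unfolding sq_induced_def w_def by auto
    have cm: "\<And>k x. x \<in> carr (disk_dg n) k \<Longrightarrow> s (w z) (k - 1) (diff (disk_dg n) k x) = diff E k (s (w z) k x)"
      using f unfolding chain_map_def by blast
    have "s (w z) (n - 1) (diff (disk_dg n) n 1) = diff E n (s (w z) n 1)"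
      using cm[of 1 n] by simp
    hence "diff E n (s (w z) n 1) = s (w z) (n - 1) (sphere_incl n (n-1) 1)" by (simp add: incl_apply)
    also have "\<dots> = fst z" using fun_cong[OF fun_cong[OF I(1), of "n-1"], of 1] by (simp add: smap_def)
    finally have 1: "diff E n (l z) = fst z" unfolding l_def .
    have 2: "p n (l z) = snd z" using fun_cong[OF fun_cong[OF I(2), of n], of 1] unfolding l_def
      by (simp add: dmap_def)
    show "?thesis z" using 1 2 disk_map_eq(2)[OF dgE f] unfolding l_def by simp
  qed
  have wadd: "\<And>z z'. z \<in> Q n \<Longrightarrow> z' \<in> Q n \<Longrightarrow> w (z + z') = w z + w z'"
    unfolding w_def by (intro prod_eqI ext) (auto simp: smap_def dmap_def scEadd scBadd Q_def)
  have wsc: "\<And>z r. z \<in> Q n \<Longrightarrow> w (pairsc sE sB r z) = pscale sE sB r (w z)"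
    unfolding w_def pscale_def pairsc_def hscale_def
    by (intro prod_eqI ext) (auto simp: smap_def dmap_def scE_comm scB_comm Q_def)
  have llin: "lin_on (pairsc sE sB) sE (Q n) l"
  proof (rule lin_onI)
    fix z z' assume z: "z \<in> Q n" and z': "z' \<in> Q n"
    show "l (z + z') = l z + l z'" unfolding l_def wadd[OF z z'] lin_add[OF slin wsq[OF z] wsq[OF z']]
      by simp
  next
    fix r z assume z: "z \<in> Q n"
    show "l (pairsc sE sB r z) = sE r (l z)" unfolding l_def wsc[OF z] lin_scale[OF slin wsq[OF z]]
      by (simp add: hscale_def)
  qed
  show ?thesis unfolding is_lift_def using props llin by blast
qed

lemma A2:
  assumes il: "is_lift n l"
  shows "enriched_rlp (*) (sphere_dg n) (*) (disk_dg n) (sphere_incl n) sE E sB B p"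
proof -
  have LQ: "\<And>z. z \<in> Q n \<Longrightarrow> l z \<in> carr E n \<and> diff E n (l z) = fst z \<and> p n (l z) = snd z"
    and llin: "lin_on (pairsc sE sB) sE (Q n) l" using il unfolding is_lift_def by auto
  define v where "v z = (fst z (n - 1) 1, snd z n 1)" for z :: "(int \<Rightarrow> 'r \<Rightarrow> 'e) \<times> (int \<Rightarrow> 'r \<Rightarrow> 'b)"
  define s where "s z = dmap sE E n (l (v z))" for z
  have key: "\<And>z. z \<in> sq n \<Longrightarrow> v z \<in> Q n \<and> fst z = smap sE n (fst (v z)) \<and> snd z = dmap sB B n (snd (v z))"
  proof -
    fix z assume z: "z \<in> sq n"
    obtain a b where ab: "z = (a, b)" by (cases z)
    have a: "chain_map (*) (sphere_dg n) sE E a" and b: "chain_map (*) (disk_dg n) sB B b"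
      and eq: "(\<lambda>k x. p k (a k x)) = (\<lambda>k x. b k (sphere_incl n k x))"
      using z unfolding ab sq_dg_def hom_dg_def by auto
    have ae: "a = smap sE n (a (n-1) 1)" "a (n - 1) 1 \<in> carr E (n - 1)" "diff E (n - 1) (a (n - 1) 1) = 0"
      using sphere_map_eq[OF dgE a] by auto
    have be: "b = dmap sB B n (b n 1)" "b n 1 \<in> carr B n" using disk_map_eq[OF dgB b] by auto
    have "p (n-1) (a (n-1) 1) = b (n-1) (sphere_incl n (n-1) 1)" using fun_cong[OF fun_cong[OF eq]] by simp
    also have "\<dots> = diff B n (b n 1)" by (subst be(1)) (simp add: incl_apply dmap_def)
    finally have "v z \<in> Q n" using ae be unfolding v_def ab Q_def by simp
    thus "?thesis z" using ae be unfolding v_def ab by simp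
  qed
  have hom: "\<And>z. z \<in> sq n \<Longrightarrow> s z \<in> hom_dg (*) (disk_dg n) sE E"
    unfolding s_def hom_dg_def using disk_map[OF dgE] LQ key by blast
  have ind: "\<And>z. z \<in> sq n \<Longrightarrow> sq_induced (sphere_incl n) p (s z) = z"
  proof -
    fix z assume z: "z \<in> sq n"
    obtain c bb where vz: "v z = (c, bb)" by (cases "v z")
    have k: "(c,bb) \<in> Q n" "fst z = smap sE n c" "snd z = dmap sB B n bb" using key[OF z] vz by auto
    have e: "l (c,bb) \<in> carr E n" "diff E n (l (c,bb)) = c" "p n (l (c,bb)) = bb" using LQ[OF k(1)] by auto
    have cE: "c \<in> carr E (n - 1)" using k(1) unfolding Q_def by simp
    have pd': "p (n - 1) (diff E n (l (c,bb))) = diff B n bb" using pd[OF e(1)] e(3) by simp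
    have 1: "(\<lambda>k x. s z k (sphere_incl n k x)) = fst z"
      unfolding k(2) s_def vz by (intro ext) (auto simp: dmap_def smap_def incl_apply e)
    have 2: "(\<lambda>k x. p k (s z k x)) = snd z"
      unfolding k(3) s_def vz using e pd' cE by (intro ext) (auto simp: dmap_def)
    show "?thesis z" unfolding sq_induced_def 1 2 by simp
  qed
  have slin: "lin_on (pscale sE sB) (hscale sE) (sq n) s"
  proof (rule lin_onI)
    fix z z' assume z: "z \<in> sq n" and z': "z' \<in> sq n"
    have v: "v (z + z') = v z + v z'" unfolding v_def by simp
    have e: "l (v z) \<in> carr E n" "l (v z') \<in> carr E n" using LQ key z z' by auto
    show "s (z + z') = s z + s z'" unfolding s_def v lin_add[OF llin key[OF z, THEN conjunct1] key[OF z', THEN conjunct1]]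
      using e by (intro ext) (auto simp: dmap_def scEadd module.scale_left_distrib[OF mE])
  next
    fix r z assume z: "z \<in> sq n"
    have v: "v (pscale sE sB r z) = pairsc sE sB r (v z)" unfolding v_def pscale_def pairsc_def hscale_def by simp
    have e: "l (v z) \<in> carr E n" using LQ key z by auto
    show "s (pscale sE sB r z) = hscale sE r (s z)" unfolding s_def v lin_scale[OF llin key[OF z, THEN conjunct1]]
      using e by (intro ext) (auto simp: dmap_def hscale_def scE_comm)
  qed
  show ?thesis unfolding enriched_rlp_def using hom ind slin by blast
qed

end

theorem lemma2p9:
  fixes sE :: "'r::comm_ring_1 \<Rightarrow> 'e::ab_group_add \<Rightarrow> 'e"
    and sB :: "'r \<Rightarrow> 'b::ab_group_add \<Rightarrow> 'b"
    and E :: "'e dg" and B :: "'b dg" and p :: "int \<Rightarrow> 'e \<Rightarrow> 'b"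
  assumes "dg_module sE E" and "dg_module sB B" and "chain_map sE E sB B p"
  shows "(\<forall>n::int. enriched_rlp (*) (sphere_dg n) (*) (disk_dg n) (sphere_incl n) sE E sB B p)
     \<longleftrightarrow> degreewise_split_epi sE E sB B p \<and> chain_htpy_equiv sE E sB B p"
proof -
  interpret setting sE sB E B p by unfold_locales (rule assms)+
  show ?thesis
  proof
    assume h: "\<forall>n::int. enriched_rlp (*) (sphere_dg n) (*) (disk_dg n) (sphere_incl n) sE E sB B p"
    have "\<forall>n. \<exists>l. is_lift n l" using h A1 by blast
    then obtain L where "\<And>n. is_lift n (L n)" by metis
    thus "degreewise_split_epi sE E sB B p \<and> chain_htpy_equiv sE E sB B p" by (rule B1)
  next
    assume h: "degreewise_split_epi sE E sB B p \<and> chain_htpy_equiv sE E sB B p"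
    show "\<forall>n::int. enriched_rlp (*) (sphere_dg n) (*) (disk_dg n) (sphere_incl n) sE E sB B p"
    proof
      fix n :: int
      obtain l where "is_lift n l" using B2 h by blast
      thus "enriched_rlp (*) (sphere_dg n) (*) (disk_dg n) (sphere_incl n) sE E sB B p" by (rule A2)
    qed
  qed
qed

end
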